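(* Let $\mathcal{S}$ be a constrained system with a single-state graph presentation as in the context, with edge set $\mathcal{E}$, label length $s$ and pair counts $\alpha_t$. Then $$\mathcal{GV}(\mathcal{S})\triangleq\{(\delta,R_{\rm GV}(\delta)):\delta\in[0,1]\}=\{(\delta(y),\rho(y)):y\in[0,1]\}\cup\{(\delta,0):\delta\ge\delta_{\max}\},$$ where $$\delta_{\max}=\frac{\sum_{t\ge0}t\alpha_t}{s|\mathcal{E}|^2},\qquad \delta(y)=\frac{\sum_{t\ge0}t\alpha_ty^t}{s\sum_{t\ge0}\alpha_ty^t},\qquad \rho(y)=\frac1s\left(\log\frac{|\mathcal{E}|^2}{\sum_{t\ge0}\alpha_ty^t}+\frac{\sum_{t\ge0}t\alpha_ty^t}{\sum_{t\ge0}\alpha_ty^t}\log y\right).$$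
   Context: $\mathcal{G}$ is a labelled graph with exactly one state, a finite set $\mathcal{E}$ of loops (parallel edges) at that state, and an injective labelling $\mathcal{L}:\mathcal{E}\to\{0,1\}^s$ for some $s\ge1$. $\mathcal{S}$ is the set of words obtained by concatenating labels along paths; for $n$ a multiple of $s$, $\mathcal{S}_n$ is the set of such words of length $n$ (labels of paths with $n/s$ edges). $\log$ is to a fixed base (base 2); limits below are over $n$ multiple of $s$. $\mathrm{Cap}(\mathcal{S})=\limsup\frac1n\log|\mathcal{S}_n|$. For $\mathbf{x}\in\mathcal{S}_n$, $V(\mathbf{x},r)=|\{\mathbf{y}\in\mathcal{S}_n:d_H(\mathbf{x},\mathbf{y})\le r\}|$ ($d_H$ = Hamming distance), $T(n,d)=\sum_{\mathbf{x}\in\mathcal{S}_n}V(\mathbf{x},d-1)$, $\widetilde T(\delta)=\limsup\frac1n\log T(n,\lfloor\delta n\rfloor)$, and $R_{\rm GV}(\delta)=2\,\mathrm{Cap}(\mathcal{S})-\widetilde T(\delta)$. For $0\le t\le s$, $\alpha_t=\#\{(e,f)\in\mathcal{E}^2:d_H(\mathcal{L}(e),\mathcal{L}(f))=t\}$. At $y=0$ the term involving $\log 0$ is interpreted as $0$. *)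

theory Defs
  imports "HOL-Analysis.Analysis" "HOL-Library.Liminf_Limsup"
begin

text \<open>Single-state labelled graph: edge set E, labelling L with labels bool lists of length s.
  Words of length k*s are concatenations of labels of k edges.\<close>

definition words :: "('e \<Rightarrow> bool list) \<Rightarrow> 'e set \<Rightarrow> nat \<Rightarrow> bool list set" where
  "words L E k = {concat (map L es) | es. length es = k \<and> set es \<subseteq> E}"

definition hamming :: "bool list \<Rightarrow> bool list \<Rightarrow> nat" where
  "hamming x y = card {i. i < length x \<and> x ! i \<noteq> y ! i}"

definition ball_count :: "('e \<Rightarrow> bool list) \<Rightarrow> 'e set \<Rightarrow> nat \<Rightarrow> bool list \<Rightarrow> nat \<Rightarrow> nat" where
  "ball_count L E k x r = card {y \<in> words L E k. hamming x y \<le> r}"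

text \<open>T(n,d) with n = k*s; d - 1 is truncated subtraction on nat.\<close>
definition Tsum :: "('e \<Rightarrow> bool list) \<Rightarrow> 'e set \<Rightarrow> nat \<Rightarrow> nat \<Rightarrow> nat" where
  "Tsum L E k d = (\<Sum>x\<in>words L E k. ball_count L E k x (d - 1))"

definition cap :: "('e \<Rightarrow> bool list) \<Rightarrow> 'e set \<Rightarrow> nat \<Rightarrow> real" where
  "cap L E s = real_of_ereal
     (limsup (\<lambda>k. ereal (log 2 (real (card (words L E k))) / real (k * s))))"

definition Ttilde :: "('e \<Rightarrow> bool list) \<Rightarrow> 'e set \<Rightarrow> nat \<Rightarrow> real \<Rightarrow> real" where
  "Ttilde L E s \<delta> = real_of_ereal
     (limsup (\<lambda>k. ereal (log 2 (real (Tsum L E k (nat \<lfloor>\<delta> * real (k * s)\<rfloor>))) / real (k * s))))"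

definition R_GV :: "('e \<Rightarrow> bool list) \<Rightarrow> 'e set \<Rightarrow> nat \<Rightarrow> real \<Rightarrow> real" where
  "R_GV L E s \<delta> = 2 * cap L E s - Ttilde L E s \<delta>"

definition alpha :: "('e \<Rightarrow> bool list) \<Rightarrow> 'e set \<Rightarrow> nat \<Rightarrow> nat" where
  "alpha L E t = card {(e, f). e \<in> E \<and> f \<in> E \<and> hamming (L e) (L f) = t}"

definition delta_max :: "('e \<Rightarrow> bool list) \<Rightarrow> 'e set \<Rightarrow> nat \<Rightarrow> real" where
  "delta_max L E s = (\<Sum>t\<le>s. real t * real (alpha L E t)) / (real s * real (card E) ^ 2)"

definition delta_y :: "('e \<Rightarrow> bool list) \<Rightarrow> 'e set \<Rightarrow> nat \<Rightarrow> real \<Rightarrow> real" where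
  "delta_y L E s y = (\<Sum>t\<le>s. real t * real (alpha L E t) * y ^ t)
                     / (real s * (\<Sum>t\<le>s. real (alpha L E t) * y ^ t))"

text \<open>Note: log 2 0 = 0 in Isabelle, matching the convention at y = 0.\<close>
definition rho_y :: "('e \<Rightarrow> bool list) \<Rightarrow> 'e set \<Rightarrow> nat \<Rightarrow> real \<Rightarrow> real" where
  "rho_y L E s y = (1 / real s) *
     (log 2 (real (card E) ^ 2 / (\<Sum>t\<le>s. real (alpha L E t) * y ^ t))
      + ((\<Sum>t\<le>s. real t * real (alpha L E t) * y ^ t) / (\<Sum>t\<le>s. real (alpha L E t) * y ^ t)) * log 2 y)"

end

theory Submission
  imports Defs
begin


lemma hamming_Nil[simp]: "hamming [] y = 0"
  by (simp add: hamming_def)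

lemma set_Suc_split: "{i. i < Suc n \<and> P i} = {i. i = 0 \<and> P 0} \<union> Suc ` {i. i < n \<and> P (Suc i)}"
  by (auto simp: image_iff less_Suc_eq_0_disj)

lemma hamming_Cons[simp]: "hamming (a#x) (b#y) = (if a = b then 0 else 1) + hamming x y"
proof -
  have e: "{i. i < length (a#x) \<and> (a#x) ! i \<noteq> (b#y) ! i}
        = {i. i = 0 \<and> a \<noteq> b} \<union> Suc ` {i. i < length x \<and> x ! i \<noteq> y ! i}"
    using set_Suc_split[of "length x" "\<lambda>i. (a#x) ! i \<noteq> (b#y) ! i"] by simp
  have c: "card (Suc ` {i. i < length x \<and> x ! i \<noteq> y ! i}) = hamming x y"
    by (simp add: card_image hamming_def)
  have f: "finite (Suc ` {i. i < length x \<and> x ! i \<noteq> y ! i})" by simp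
  show ?thesis
  proof (cases "a = b")
    case True then show ?thesis unfolding hamming_def[of "a#x"] e using c by simp
  next
    case False
    then have "{i. i = 0 \<and> a \<noteq> b} = {0}" by auto
    then show ?thesis unfolding hamming_def[of "a#x"] e using c f False by (simp add: image_iff)
  qed
qed

lemma hamming_append: "length x1 = length y1 \<Longrightarrow>
   hamming (x1 @ x2) (y1 @ y2) = hamming x1 y1 + hamming x2 y2"
proof (induction x1 arbitrary: y1)
  case Nil then show ?case by simp
next
  case (Cons a x1) then show ?case by (cases y1) auto
qed

lemma hamming_self[simp]: "hamming x x = 0"
  by (simp add: hamming_def)

lemma hamming_le: "hamming x y \<le> length x"
proof -
  have "{i. i < length x \<and> x ! i \<noteq> y ! i} \<subseteq> {..<length x}" by auto
  then show ?thesis unfolding hamming_def by (metis card_lessThan card_mono finite_lessThan)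
qed

lemma hamming_zero: "length x = length y \<Longrightarrow> hamming x y = 0 \<Longrightarrow> x = y"
proof (induction x arbitrary: y)
  case Nil then show ?case by simp
next
  case (Cons a x) then show ?case by (cases y) (auto split: if_splits)
qed

definition llen :: "'a set \<Rightarrow> nat \<Rightarrow> 'a list set" where
  "llen A n = {xs. set xs \<subseteq> A \<and> length xs = n}"

lemma llen_Suc: "llen A (Suc n) = (\<lambda>(a, xs). a # xs) ` (A \<times> llen A n)"
  unfolding llen_def by (auto simp: length_Suc_conv image_iff)

lemma finite_llen: "finite A \<Longrightarrow> finite (llen A n)"
  unfolding llen_def by (rule finite_lists_length_eq)

lemma card_llen: "finite A \<Longrightarrow> card (llen A n) = card A ^ n"
  unfolding llen_def by (rule card_lists_length_eq)

lemma sum_llen_Suc: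
  assumes "finite A"
  shows "(\<Sum>xs\<in>llen A (Suc n). f xs) = (\<Sum>a\<in>A. \<Sum>xs\<in>llen A n. f (a # xs))"
proof -
  have inj: "inj_on (\<lambda>(a, xs). a # xs) (A \<times> llen A n)" by (auto simp: inj_on_def)
  have "(\<Sum>xs\<in>llen A (Suc n). f xs) = (\<Sum>p\<in>A \<times> llen A n. f ((\<lambda>(a, xs). a # xs) p))"
    unfolding llen_Suc by (rule sum.reindex[OF inj, unfolded comp_def])
  also have "\<dots> = (\<Sum>a\<in>A. \<Sum>xs\<in>llen A n. f (a # xs))"
    unfolding sum.cartesian_product by (simp add: case_prod_unfold)
  finally show ?thesis .
qed

lemma llen_0[simp]: "llen A 0 = {[]}" by (auto simp: llen_def)




definition wsum :: "('a \<Rightarrow> nat) \<Rightarrow> 'a list \<Rightarrow> nat" where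
  "wsum g xs = sum_list (map g xs)"

lemma wsum_Cons[simp]: "wsum g (a # xs) = g a + wsum g xs"
  by (simp add: wsum_def)
lemma wsum_Nil[simp]: "wsum g [] = 0"
  by (simp add: wsum_def)

lemma sum_pow_llen:
  fixes y :: real
  assumes "finite P"
  shows "(\<Sum>xs\<in>llen P n. y ^ wsum g xs) = (\<Sum>p\<in>P. y ^ g p) ^ n"
proof (induction n)
  case 0 then show ?case by simp
next
  case (Suc n)
  have "(\<Sum>xs\<in>llen P (Suc n). y ^ wsum g xs) = (\<Sum>a\<in>P. \<Sum>xs\<in>llen P n. y ^ g a * y ^ wsum g xs)"
    by (simp add: sum_llen_Suc[OF assms] power_add)
  also have "\<dots> = (\<Sum>a\<in>P. y ^ g a * (\<Sum>xs\<in>llen P n. y ^ wsum g xs))"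
    by (simp add: sum_distrib_left)
  also have "\<dots> = (\<Sum>p\<in>P. y ^ g p) ^ Suc n"
    by (simp add: Suc sum_distrib_right[symmetric])
  finally show ?case .
qed

lemma sum_mean_llen:
  fixes y \<mu> :: real
  assumes "finite P" and m: "(\<Sum>p\<in>P. y ^ g p * (real (g p) - \<mu>)) = 0"
  shows "(\<Sum>xs\<in>llen P n. y ^ wsum g xs * (real (wsum g xs) - n * \<mu>)) = 0"
proof (induction n)
  case 0 then show ?case by simp
next
  case (Suc n)
  have "(\<Sum>xs\<in>llen P (Suc n). y ^ wsum g xs * (real (wsum g xs) - Suc n * \<mu>))
     = (\<Sum>a\<in>P. \<Sum>xs\<in>llen P n. (y ^ g a * (real (g a) - \<mu>)) * y ^ wsum g xs
                 + y ^ g a * (y ^ wsum g xs * (real (wsum g xs) - n * \<mu>)))"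
    by (simp add: sum_llen_Suc[OF assms(1)] power_add algebra_simps)
  also have "\<dots> = (\<Sum>a\<in>P. (y ^ g a * (real (g a) - \<mu>)) * (\<Sum>xs\<in>llen P n. y ^ wsum g xs)
        + y ^ g a * (\<Sum>xs\<in>llen P n. y ^ wsum g xs * (real (wsum g xs) - n * \<mu>)))"
    by (simp only: sum.distrib sum_distrib_left)
  also have "\<dots> = (\<Sum>a\<in>P. y ^ g a * (real (g a) - \<mu>)) * (\<Sum>xs\<in>llen P n. y ^ wsum g xs)
        + (\<Sum>a\<in>P. y ^ g a) * (\<Sum>xs\<in>llen P n. y ^ wsum g xs * (real (wsum g xs) - n * \<mu>))"
    by (simp only: sum.distrib sum_distrib_right)
  also have "\<dots> = 0" using m Suc by simp
  finally show ?case .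
qed

lemma sum_var_llen:
  fixes y \<mu> B :: real
  assumes "finite P" and m: "(\<Sum>p\<in>P. y ^ g p * (real (g p) - \<mu>)) = 0"
    and y: "y \<ge> 0"
    and V: "(\<Sum>p\<in>P. y ^ g p * (real (g p) - \<mu>)^2) \<le> B * (\<Sum>p\<in>P. y ^ g p)"
  shows "(\<Sum>xs\<in>llen P n. y ^ wsum g xs * (real (wsum g xs) - n * \<mu>)^2) \<le> n * B * (\<Sum>p\<in>P. y ^ g p) ^ n"
proof (induction n)
  case 0 then show ?case by simp
next
  case (Suc n)
  let ?A = "\<Sum>p\<in>P. y ^ g p"
  have A0: "?A \<ge> 0" using y by (simp add: sum_nonneg)
  have "(\<Sum>xs\<in>llen P (Suc n). y ^ wsum g xs * (real (wsum g xs) - Suc n * \<mu>)^2)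
     = (\<Sum>a\<in>P. \<Sum>xs\<in>llen P n. (y ^ g a * (real (g a) - \<mu>)^2) * y ^ wsum g xs
                 + 2 * (y ^ g a * (real (g a) - \<mu>)) * (y ^ wsum g xs * (real (wsum g xs) - n * \<mu>))
                 + y ^ g a * (y ^ wsum g xs * (real (wsum g xs) - n * \<mu>)^2))"
    by (simp add: sum_llen_Suc[OF assms(1)] power_add algebra_simps power2_eq_square)
  also have "\<dots> = (\<Sum>a\<in>P. (y ^ g a * (real (g a) - \<mu>)^2) * (\<Sum>xs\<in>llen P n. y ^ wsum g xs)
        + 2 * (y ^ g a * (real (g a) - \<mu>)) * (\<Sum>xs\<in>llen P n. y ^ wsum g xs * (real (wsum g xs) - n * \<mu>))
        + y ^ g a * (\<Sum>xs\<in>llen P n. y ^ wsum g xs * (real (wsum g xs) - n * \<mu>)^2))"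
    by (simp only: sum.distrib sum_distrib_left)
  also have "\<dots> = (\<Sum>a\<in>P. y ^ g a * (real (g a) - \<mu>)^2) * (\<Sum>xs\<in>llen P n. y ^ wsum g xs)
        + (\<Sum>a\<in>P. 2 * (y ^ g a * (real (g a) - \<mu>))) * (\<Sum>xs\<in>llen P n. y ^ wsum g xs * (real (wsum g xs) - n * \<mu>))
        + ?A * (\<Sum>xs\<in>llen P n. y ^ wsum g xs * (real (wsum g xs) - n * \<mu>)^2)"
    by (simp only: sum.distrib sum_distrib_right)
  also have "\<dots> = (\<Sum>a\<in>P. y ^ g a * (real (g a) - \<mu>)^2) * ?A ^ n
        + ?A * (\<Sum>xs\<in>llen P n. y ^ wsum g xs * (real (wsum g xs) - n * \<mu>)^2)"
    using m by (simp add: sum_pow_llen[OF assms(1)] sum_distrib_left[symmetric])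
  also have "\<dots> \<le> (B * ?A) * ?A ^ n + ?A * (n * B * ?A ^ n)"
    by (intro add_mono mult_right_mono mult_left_mono V Suc A0 zero_le_power)
  also have "\<dots> = Suc n * B * ?A ^ Suc n" by (simp add: algebra_simps)
  finally show ?case .
qed




lemma cheb_sum:
  fixes y \<mu> B \<beta> :: real
  assumes P: "finite P" and m: "(\<Sum>p\<in>P. y ^ g p * (real (g p) - \<mu>)) = 0"
    and y: "y \<ge> 0"
    and V: "(\<Sum>p\<in>P. y ^ g p * (real (g p) - \<mu>)^2) \<le> B * (\<Sum>p\<in>P. y ^ g p)"
    and \<beta>: "\<beta> > 0" and n: "n > 0" and nb: "2 * B \<le> real n * \<beta>^2"
  shows "(\<Sum>xs\<in>{xs\<in>llen P n. \<bar>real (wsum g xs) - n * \<mu>\<bar> \<le> n * \<beta>}. y ^ wsum g xs)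
           \<ge> (\<Sum>p\<in>P. y ^ g p) ^ n / 2"
proof -
  let ?A = "\<Sum>p\<in>P. y ^ g p"
  let ?S = "{xs\<in>llen P n. \<bar>real (wsum g xs) - n * \<mu>\<bar> \<le> n * \<beta>}"
  let ?T = "{xs\<in>llen P n. \<not> \<bar>real (wsum g xs) - n * \<mu>\<bar> \<le> n * \<beta>}"
  let ?c = "(n * \<beta>)^2"
  have fin: "finite (llen P n)" by (rule finite_llen[OF P])
  have A0: "?A \<ge> 0" using y by (simp add: sum_nonneg)
  have c: "?c > 0" using \<beta> n by simp
  have eq: "llen P n = ?S \<union> ?T" by auto
  have split: "(\<Sum>xs\<in>llen P n. y ^ wsum g xs) = (\<Sum>xs\<in>?S. y ^ wsum g xs) + (\<Sum>xs\<in>?T. y ^ wsum g xs)"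
    by (subst eq, rule sum.union_disjoint) (use fin in auto)
  have "(\<Sum>xs\<in>?T. y ^ wsum g xs) \<le> (\<Sum>xs\<in>?T. y ^ wsum g xs * (real (wsum g xs) - n * \<mu>)^2 / ?c)"
  proof (rule sum_mono)
    fix xs assume "xs \<in> ?T"
    then have "\<bar>real (wsum g xs) - n * \<mu>\<bar> > n * \<beta>" by auto
    then have "(real (wsum g xs) - n * \<mu>)^2 \<ge> ?c"
      using \<beta> by (metis abs_le_square_iff abs_of_nonneg less_imp_le mult_nonneg_nonneg of_nat_0_le_iff)
    then have "1 \<le> (real (wsum g xs) - n * \<mu>)^2 / ?c" using c by simp
    then show "y ^ wsum g xs \<le> y ^ wsum g xs * (real (wsum g xs) - n * \<mu>)^2 / ?c"
      using y mult_left_mono[of 1 "(real (wsum g xs) - n * \<mu>)^2 / ?c" "y ^ wsum g xs"]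
      by (simp add: times_divide_eq_right)
  qed
  also have "\<dots> \<le> (\<Sum>xs\<in>llen P n. y ^ wsum g xs * (real (wsum g xs) - n * \<mu>)^2 / ?c)"
    by (rule sum_mono2[OF fin]) (use y c in auto)
  also have "\<dots> = (\<Sum>xs\<in>llen P n. y ^ wsum g xs * (real (wsum g xs) - n * \<mu>)^2) / ?c"
    by (simp add: sum_divide_distrib)
  also have "\<dots> \<le> (n * B * ?A ^ n) / ?c"
    by (rule divide_right_mono[OF sum_var_llen[OF P m y V]]) (use c in simp)
  also have "\<dots> \<le> ?A ^ n / 2"
  proof -
    have "n * B * ?A ^ n * 2 \<le> ?A ^ n * ?c"
    proof -
      have "n * B * 2 \<le> ?c" using nb n by (simp add: power2_eq_square algebra_simps)
      then show ?thesis using A0 mult_left_mono[of "n * B * 2" ?c "?A ^ n"] by (simp add: algebra_simps)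
    qed
    then show ?thesis using c by (simp add: field_simps)
  qed
  finally have "(\<Sum>xs\<in>?T. y ^ wsum g xs) \<le> ?A ^ n / 2" .
  then show ?thesis using split sum_pow_llen[OF P, where y=y and n=n and g=g] by simp
qed

lemma cheb_card:
  fixes y \<mu> B \<beta> :: real
  assumes P: "finite P" and m: "(\<Sum>p\<in>P. y ^ g p * (real (g p) - \<mu>)) = 0"
    and y: "y > 0" "y \<le> 1"
    and V: "(\<Sum>p\<in>P. y ^ g p * (real (g p) - \<mu>)^2) \<le> B * (\<Sum>p\<in>P. y ^ g p)"
    and \<beta>: "\<beta> > 0" and n: "n > 0" and nb: "2 * B \<le> real n * \<beta>^2"
  shows "real (card {xs\<in>llen P n. \<bar>real (wsum g xs) - n * \<mu>\<bar> \<le> n * \<beta>})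
           \<ge> (\<Sum>p\<in>P. y ^ g p) ^ n / 2 / y powr (n * \<mu> - n * \<beta>)"
proof -
  let ?S = "{xs\<in>llen P n. \<bar>real (wsum g xs) - n * \<mu>\<bar> \<le> n * \<beta>}"
  have "(\<Sum>p\<in>P. y ^ g p) ^ n / 2 \<le> (\<Sum>xs\<in>?S. y ^ wsum g xs)"
    by (rule cheb_sum[OF P m _ V \<beta> n nb]) (use y in simp)
  also have "\<dots> \<le> (\<Sum>xs\<in>?S. y powr (n * \<mu> - n * \<beta>))"
  proof (rule sum_mono)
    fix xs assume "xs \<in> ?S"
    then have "n * \<mu> - n * \<beta> \<le> real (wsum g xs)" by auto
    then have "y powr real (wsum g xs) \<le> y powr (n * \<mu> - n * \<beta>)"
      by (rule powr_mono') (use y in auto)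
    then show "y ^ wsum g xs \<le> y powr (n * \<mu> - n * \<beta>)" using y by (simp add: powr_realpow)
  qed
  also have "\<dots> = real (card ?S) * y powr (n * \<mu> - n * \<beta>)" by simp
  finally show ?thesis using y by (simp add: field_simps)
qed




definition hp :: "('e \<Rightarrow> bool list) \<Rightarrow> 'e \<times> 'e \<Rightarrow> nat" where
  "hp L p = hamming (L (fst p)) (L (snd p))"

definition NN :: "('e \<Rightarrow> bool list) \<Rightarrow> 'e set \<Rightarrow> nat \<Rightarrow> nat \<Rightarrow> nat" where
  "NN L E k r = card {ps \<in> llen (E \<times> E) k. wsum (hp L) ps \<le> r}"

locale sg =
  fixes E :: "'e set" and L :: "'e \<Rightarrow> bool list" and s :: nat
  assumes fE: "finite E" and nE: "E \<noteq> {}" and s1: "s \<ge> 1"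
    and inj: "inj_on L E" and len: "\<forall>e\<in>E. length (L e) = s"
begin

lemma concat_inj:
  "set es \<subseteq> E \<Longrightarrow> set fs \<subseteq> E \<Longrightarrow> length es = length fs \<Longrightarrow>
   concat (map L es) = concat (map L fs) \<Longrightarrow> es = fs"
proof (induction es arbitrary: fs)
  case Nil then show ?case by simp
next
  case (Cons e es)
  then obtain f fs' where fs: "fs = f # fs'" by (cases fs) auto
  have "length (L e) = length (L f)" using Cons.prems len fs by auto
  then have "L e = L f" "concat (map L es) = concat (map L fs')" using Cons.prems(4) fs by auto
  then show ?case using Cons fs inj by (auto simp: inj_on_def)
qed

lemma words_eq: "words L E k = (\<lambda>es. concat (map L es)) ` llen E k"
  unfolding words_def llen_def by auto

lemma card_words: "card (words L E k) = card E ^ k"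
proof -
  have "inj_on (\<lambda>es. concat (map L es)) (llen E k)"
    by (auto simp: inj_on_def llen_def intro: concat_inj)
  then show ?thesis unfolding words_eq by (simp add: card_image card_llen fE)
qed

lemma hamming_concat:
  "set ps \<subseteq> E \<times> E \<Longrightarrow>
   hamming (concat (map L (map fst ps))) (concat (map L (map snd ps))) = wsum (hp L) ps"
proof (induction ps)
  case Nil then show ?case by simp
next
  case (Cons p ps)
  then have "length (L (fst p)) = length (L (snd p))" using len by auto
  then show ?case using Cons by (simp add: hamming_append hp_def)
qed

lemma Tsum_NN: "Tsum L E k d = NN L E k (d - 1)"
proof -
  let ?W = "words L E k"
  let ?r = "d - 1"
  let ?c = "\<lambda>es. concat (map L es)"
  let ?f = "\<lambda>ps. (?c (map fst ps), ?c (map snd ps))"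
  let ?S = "{ps \<in> llen (E \<times> E) k. wsum (hp L) ps \<le> ?r}"
  have finW: "finite ?W" unfolding words_eq by (simp add: finite_llen fE)
  have "Tsum L E k d = card (SIGMA x:?W. {y \<in> ?W. hamming x y \<le> ?r})"
    unfolding Tsum_def ball_count_def using finW by simp
  also have "(SIGMA x:?W. {y \<in> ?W. hamming x y \<le> ?r}) = ?f ` ?S"
  proof
    show "?f ` ?S \<subseteq> (SIGMA x:?W. {y \<in> ?W. hamming x y \<le> ?r})"
    proof
      fix z assume "z \<in> ?f ` ?S"
      then obtain ps where ps: "ps \<in> ?S" and z: "z = ?f ps" by blast
      have "map fst ps \<in> llen E k" "map snd ps \<in> llen E k" using ps by (auto simp: llen_def)
      then have "?c (map fst ps) \<in> ?W" "?c (map snd ps) \<in> ?W" unfolding words_eq by blast+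
      then show "z \<in> (SIGMA x:?W. {y \<in> ?W. hamming x y \<le> ?r})"
        using ps z hamming_concat[of ps] by (auto simp: llen_def)
    qed
  next
    show "(SIGMA x:?W. {y \<in> ?W. hamming x y \<le> ?r}) \<subseteq> ?f ` ?S"
    proof
      fix z assume "z \<in> (SIGMA x:?W. {y \<in> ?W. hamming x y \<le> ?r})"
      then obtain es fs where es: "es \<in> llen E k" and fs: "fs \<in> llen E k"
        and z: "z = (?c es, ?c fs)" and h: "hamming (?c es) (?c fs) \<le> ?r"
        unfolding words_eq by auto
      let ?ps = "zip es fs"
      have l: "length es = length fs" using es fs by (simp add: llen_def)
      have st: "set ?ps \<subseteq> E \<times> E" using es fs by (auto simp: llen_def dest: set_zip_leftD set_zip_rightD)
      have "?ps \<in> ?S" using st l h hamming_concat[OF st] es by (simp add: llen_def)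
      moreover have "z = ?f ?ps" using l z by simp
      ultimately show "z \<in> ?f ` ?S" by blast
    qed
  qed
  also have "card (?f ` ?S) = card ?S"
  proof (rule card_image, rule inj_onI)
    fix ps qs assume ps: "ps \<in> ?S" and qs: "qs \<in> ?S" and eq: "?f ps = ?f qs"
    have "map fst ps = map fst qs"
      by (rule concat_inj) (use ps qs eq in \<open>auto simp: llen_def\<close>)
    moreover have "map snd ps = map snd qs"
      by (rule concat_inj) (use ps qs eq in \<open>auto simp: llen_def\<close>)
    ultimately show "ps = qs" by (metis zip_map_fst_snd)
  qed
  finally show ?thesis unfolding NN_def .
qed

lemma hp_le: "p \<in> E \<times> E \<Longrightarrow> hp L p \<le> s"
  using hamming_le[of "L (fst p)" "L (snd p)"] len by (auto simp: hp_def)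

lemma alpha_eq: "alpha L E t = card {p \<in> E \<times> E. hp L p = t}"
  unfolding alpha_def hp_def by (rule arg_cong[where f=card]) auto

lemma sum_alpha_gen:
  fixes f :: "nat \<Rightarrow> real"
  shows "(\<Sum>t\<le>s. real (alpha L E t) * f t) = (\<Sum>p\<in>E \<times> E. f (hp L p))"
proof -
  have "(\<Sum>p\<in>E \<times> E. f (hp L p)) = (\<Sum>t\<in>{..s}. \<Sum>p\<in>{p \<in> E \<times> E. hp L p = t}. f (hp L p))"
    by (rule sum.group[symmetric]) (use fE hp_le in auto)
  also have "\<dots> = (\<Sum>t\<le>s. real (alpha L E t) * f t)"
    by (rule sum.cong) (auto simp: alpha_eq)
  finally show ?thesis by simp
qed

lemma diag_eq: "{p \<in> E \<times> E. hp L p = 0} = (\<lambda>e. (e, e)) ` E"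
proof -
  have "\<And>e f. e \<in> E \<Longrightarrow> f \<in> E \<Longrightarrow> hamming (L e) (L f) = 0 \<Longrightarrow> e = f"
    using hamming_zero len inj by (metis inj_on_def)
  then show ?thesis by (auto simp: hp_def image_iff) metis
qed

lemma card_diag: "card {p \<in> E \<times> E. hp L p = 0} = card E"
  unfolding diag_eq by (simp add: card_image inj_on_def)

end



definition Ay :: "('e \<Rightarrow> bool list) \<Rightarrow> 'e set \<Rightarrow> real \<Rightarrow> real" where
  "Ay L E y = (\<Sum>p\<in>E \<times> E. y ^ hp L p)"
definition My :: "('e \<Rightarrow> bool list) \<Rightarrow> 'e set \<Rightarrow> real \<Rightarrow> real" where
  "My L E y = (\<Sum>p\<in>E \<times> E. real (hp L p) * y ^ hp L p)"

context sg
begin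

lemma finP: "finite (E \<times> E)" using fE by simp

lemma Ay_ge: "y \<ge> 0 \<Longrightarrow> Ay L E y \<ge> card E"
proof -
  assume y: "y \<ge> 0"
  have "real (card E) = (\<Sum>p\<in>{p \<in> E \<times> E. hp L p = 0}. y ^ hp L p)"
    using card_diag by simp
  also have "\<dots> \<le> Ay L E y" unfolding Ay_def
    by (rule sum_mono2[OF finP]) (use y in auto)
  finally show ?thesis .
qed

lemma Ay_pos: "y \<ge> 0 \<Longrightarrow> Ay L E y > 0"
proof -
  assume y: "y \<ge> 0"
  have "card E > 0" using fE nE by (simp add: card_gt_0_iff)
  then have "real (card E) > 0" by simp
  then show ?thesis using Ay_ge[OF y] by linarith
qed

lemma My_nonneg: "y \<ge> 0 \<Longrightarrow> My L E y \<ge> 0"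
  unfolding My_def by (simp add: sum_nonneg)

lemma My_le: "y \<ge> 0 \<Longrightarrow> My L E y \<le> s * Ay L E y"
  unfolding My_def Ay_def sum_distrib_left
  by (rule sum_mono) (use hp_le in \<open>auto intro!: mult_right_mono\<close>)

lemma mean_zero:
  assumes "y \<ge> 0"
  shows "(\<Sum>p\<in>E \<times> E. y ^ hp L p * (real (hp L p) - My L E y / Ay L E y)) = 0"
proof -
  have "(\<Sum>p\<in>E \<times> E. y ^ hp L p * (real (hp L p) - My L E y / Ay L E y))
      = (\<Sum>p\<in>E \<times> E. real (hp L p) * y ^ hp L p - (My L E y / Ay L E y) * y ^ hp L p)"
    by (rule sum.cong) (auto simp: algebra_simps)
  also have "\<dots> = My L E y - (My L E y / Ay L E y) * Ay L E y"
    unfolding sum_subtractf sum_distrib_left[symmetric] My_def Ay_def ..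
  also have "\<dots> = 0" using Ay_pos[OF assms] by simp
  finally show ?thesis .
qed

lemma var_bound:
  assumes "y \<ge> 0"
  shows "(\<Sum>p\<in>E \<times> E. y ^ hp L p * (real (hp L p) - My L E y / Ay L E y)^2) \<le> real s ^ 2 * Ay L E y"
proof -
  let ?\<mu> = "My L E y / Ay L E y"
  have m0: "?\<mu> \<ge> 0" using My_nonneg[OF assms] Ay_pos[OF assms] by simp
  have m1: "?\<mu> \<le> s" using My_le[OF assms] Ay_pos[OF assms] by (simp add: divide_le_eq)
  have pw: "y ^ hp L p * (real (hp L p) - ?\<mu>)^2 \<le> real s ^ 2 * y ^ hp L p" if p: "p \<in> E \<times> E" for p
  proof -
    have "hp L p \<le> s" using hp_le[OF p] .
    then have "\<bar>real (hp L p) - ?\<mu>\<bar> \<le> s" using m0 m1 by linarith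
    then have "(real (hp L p) - ?\<mu>)^2 \<le> real s ^ 2"
      by (metis abs_le_square_iff abs_of_nat)
    then show "y ^ hp L p * (real (hp L p) - ?\<mu>)^2 \<le> real s ^ 2 * y ^ hp L p"
      using assms by (simp add: mult.commute mult_left_mono)
  qed
  have "(\<Sum>p\<in>E \<times> E. y ^ hp L p * (real (hp L p) - ?\<mu>)^2) \<le> (\<Sum>p\<in>E \<times> E. real s ^ 2 * y ^ hp L p)"
    by (rule sum_mono) (rule pw)
  also have "\<dots> = real s ^ 2 * Ay L E y" by (simp add: Ay_def sum_distrib_left)
  finally show ?thesis .
qed

lemma finS: "finite {ps \<in> llen (E \<times> E) k. P ps}"
  using finite_llen[OF finP] by simp

lemma NN_UB:
  assumes y: "y > 0" "y \<le> 1"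
  shows "real (NN L E k r) \<le> Ay L E y ^ k / y ^ r"
proof -
  let ?S = "{ps \<in> llen (E \<times> E) k. wsum (hp L) ps \<le> r}"
  have "real (NN L E k r) = (\<Sum>ps\<in>?S. 1)" unfolding NN_def by simp
  also have "\<dots> \<le> (\<Sum>ps\<in>?S. y ^ wsum (hp L) ps / y ^ r)"
  proof (rule sum_mono)
    fix ps assume "ps \<in> ?S"
    then have "y ^ r \<le> y ^ wsum (hp L) ps" using y by (auto intro: power_decreasing)
    then show "1 \<le> y ^ wsum (hp L) ps / y ^ r" using y by simp
  qed
  also have "\<dots> \<le> (\<Sum>ps\<in>llen (E \<times> E) k. y ^ wsum (hp L) ps / y ^ r)"
    by (rule sum_mono2[OF finite_llen[OF finP]]) (use y in auto)
  also have "\<dots> = Ay L E y ^ k / y ^ r"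
    unfolding sum_divide_distrib[symmetric] Ay_def by (simp add: sum_pow_llen[OF finP])
  finally show ?thesis .
qed

end


context sg
begin
lemma e0: obtains e0 where "e0 \<in> E" using nE by blast

lemma NN_pos: "NN L E k r \<ge> 1"
proof -
  obtain e0 where e0: "e0 \<in> E" using nE by blast
  have hp0: "hp L (e0, e0) = 0" by (simp add: hp_def)
  have w: "wsum (hp L) (replicate k (e0, e0)) = 0" by (induction k) (auto simp: hp0)
  have "replicate k (e0, e0) \<in> {ps \<in> llen (E \<times> E) k. wsum (hp L) ps \<le> r}"
    using e0 w by (auto simp: llen_def)
  then have "card {ps \<in> llen (E \<times> E) k. wsum (hp L) ps \<le> r} > 0"
    using finS[of k "\<lambda>ps. wsum (hp L) ps \<le> r"] card_gt_0_iff by blast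
  then show ?thesis unfolding NN_def by simp
qed

lemma NN_mono_r: "r \<le> r' \<Longrightarrow> NN L E k r \<le> NN L E k r'"
  unfolding NN_def by (rule card_mono[OF finS]) auto

lemma NN_mono_k:
  assumes "n \<le> k"
  shows "NN L E n r \<le> NN L E k r"
proof -
  obtain e0 where e0: "e0 \<in> E" using nE by blast
  have hp0: "hp L (e0, e0) = 0" by (simp add: hp_def)
  have w: "wsum (hp L) (replicate m (e0, e0)) = 0" for m by (induction m) (auto simp: hp0)
  have wa: "wsum (hp L) (xs @ ys) = wsum (hp L) xs + wsum (hp L) ys" for xs ys
    by (simp add: wsum_def)
  let ?g = "\<lambda>ps. replicate (k - n) (e0, e0) @ ps"
  show ?thesis unfolding NN_def
  proof (rule card_inj_on_le[where f = ?g])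
    show "inj_on ?g {ps \<in> llen (E \<times> E) n. wsum (hp L) ps \<le> r}" by (auto simp: inj_on_def)
    show "?g ` {ps \<in> llen (E \<times> E) n. wsum (hp L) ps \<le> r} \<subseteq> {ps \<in> llen (E \<times> E) k. wsum (hp L) ps \<le> r}"
    proof
      fix qs assume "qs \<in> ?g ` {ps \<in> llen (E \<times> E) n. wsum (hp L) ps \<le> r}"
      then obtain ps where ps: "set ps \<subseteq> E \<times> E" "length ps = n" "wsum (hp L) ps \<le> r" and qs: "qs = ?g ps"
        by (auto simp: llen_def)
      have "set qs \<subseteq> E \<times> E" using ps(1) e0 qs by auto
      moreover have "length qs = k" using ps(2) assms qs by simp
      moreover have "wsum (hp L) qs \<le> r" using ps(3) qs by (simp only: wa w)
      ultimately show "qs \<in> {ps \<in> llen (E \<times> E) k. wsum (hp L) ps \<le> r}" by (simp add: llen_def)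
    qed
    show "finite {ps \<in> llen (E \<times> E) k. wsum (hp L) ps \<le> r}" by (rule finS)
  qed
qed

lemma NN_le_total: "NN L E k r \<le> card E ^ (2 * k)"
proof -
  have "NN L E k r \<le> card (llen (E \<times> E) k)"
    unfolding NN_def by (rule card_mono[OF finite_llen[OF finP]]) auto
  also have "\<dots> = card E ^ (2 * k)" by (simp add: card_llen[OF finP] card_cartesian_product power_mult_distrib mult_2 power_add)
  finally show ?thesis .
qed

lemma NN_zero: "NN L E k 0 = card E ^ k"
proof -
  have "{ps \<in> llen (E \<times> E) k. wsum (hp L) ps \<le> 0} = llen {p \<in> E \<times> E. hp L p = 0} k"
    by (auto simp: llen_def wsum_def)
  moreover have "finite {p \<in> E \<times> E. hp L p = 0}" using finP by simp
  ultimately show ?thesis unfolding NN_def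
    by (simp add: card_llen card_diag)
qed

end



context sg
begin

definition mu :: "real \<Rightarrow> real" where "mu y = My L E y / Ay L E y"
definition Lam :: "real \<Rightarrow> real" where "Lam y = log 2 (Ay L E y) - mu y * log 2 y"

lemma Ay_ge1: "y \<ge> 0 \<Longrightarrow> Ay L E y \<ge> 1"
proof -
  assume y: "y \<ge> 0"
  have "card E > 0" using fE nE by (simp add: card_gt_0_iff)
  then have "real (card E) \<ge> 1" by simp
  then show ?thesis using Ay_ge[OF y] by linarith
qed

lemma mu_pos: "y \<ge> 0 \<Longrightarrow> My L E y > 0 \<Longrightarrow> mu y > 0"
  unfolding mu_def using Ay_pos by simp

lemma Lam_nonneg: assumes "y > 0" "y \<le> 1" "My L E y \<ge> 0" shows "Lam y \<ge> 0"
proof -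
  have "log 2 (Ay L E y) \<ge> 0" using Ay_ge1[of y] assms by simp
  moreover have "log 2 y \<le> 0" using assms by simp
  moreover have "mu y \<ge> 0" unfolding mu_def using Ay_pos[of y] assms by simp
  ultimately have "mu y * log 2 y \<le> 0" by (simp add: mult_nonneg_nonpos)
  then show ?thesis unfolding Lam_def using \<open>log 2 (Ay L E y) \<ge> 0\<close> by linarith
qed

lemma UBk:
  assumes y: "y > 0" "y \<le> 1" and M: "My L E y \<ge> 0"
  shows "log 2 (real (NN L E k (nat \<lfloor>mu y * k\<rfloor> - 1))) \<le> k * Lam y"
proof -
  let ?r = "nat \<lfloor>mu y * k\<rfloor> - 1"
  have mu0: "mu y \<ge> 0" unfolding mu_def using Ay_pos[of y] assms by simp
  have r: "real ?r \<le> mu y * k"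
  proof -
    have "real ?r \<le> real (nat \<lfloor>mu y * k\<rfloor>)" by simp
    also have "\<dots> \<le> mu y * k" using mu0 by simp
    finally show ?thesis .
  qed
  have A: "Ay L E y > 0" using Ay_pos y by simp
  have N: "real (NN L E k ?r) > 0" using NN_pos[of k ?r] by simp
  have "log 2 (real (NN L E k ?r)) \<le> log 2 (Ay L E y ^ k / y ^ ?r)"
    using NN_UB[OF y, of k ?r] N A y by (simp del: divide_le_eq)
  also have "\<dots> = k * log 2 (Ay L E y) - ?r * log 2 y"
    using A y by (simp add: log_divide log_nat_power)
  also have "\<dots> \<le> k * log 2 (Ay L E y) - (mu y * k) * log 2 y"
  proof -
    have "log 2 y \<le> 0" using y by simp
    then have "(mu y * k) * log 2 y \<le> ?r * log 2 y" using r mult_right_mono_neg by blast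
    then show ?thesis by simp
  qed
  also have "\<dots> = k * Lam y" unfolding Lam_def by (simp add: algebra_simps)
  finally show ?thesis .
qed

lemma LB:
  fixes \<epsilon> :: real
  assumes y: "y > 0" "y \<le> 1" and M: "My L E y > 0" and e: "0 < \<epsilon>" "\<epsilon> < 1"
    and c1: "(1 - \<epsilon>) * k - 1 \<ge> 1"
    and c2: "2 * real s ^ 2 \<le> ((1 - \<epsilon>) * k - 1) * (\<epsilon> * mu y / 2)^2"
    and c3: "\<epsilon> * k * mu y / 2 \<ge> 2"
  shows "log 2 (real (NN L E k (nat \<lfloor>mu y * k\<rfloor> - 1)))
           \<ge> ((1 - \<epsilon>) * k - 1) * Lam y + k * (\<epsilon> * mu y / 2) * log 2 y - 1"
proof -
  define \<mu> where "\<mu> = mu y"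
  define \<beta> where "\<beta> = \<epsilon> * \<mu> / 2"
  define A where "A = Ay L E y"
  define n where "n = nat \<lfloor>(1 - \<epsilon>) * k\<rfloor>"
  define r where "r = nat \<lfloor>\<mu> * k\<rfloor> - 1"
  have mu0: "\<mu> > 0" unfolding \<mu>_def using mu_pos[of y] y M by simp
  have b0: "\<beta> > 0" unfolding \<beta>_def using mu0 e by simp
  have A0: "A > 0" unfolding A_def using Ay_pos y by simp
  have Lam0: "Lam y \<ge> 0" using Lam_nonneg[of y] y M by simp
  have ly: "log 2 y \<le> 0" using y by simp
  have hn1: "real n \<ge> (1 - \<epsilon>) * k - 1"
    unfolding n_def using e by linarith
  have hn2: "real n \<le> (1 - \<epsilon>) * k"
    unfolding n_def using e by (simp add: of_nat_nat)
  have hn3: "real n \<le> k"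
  proof -
    have "(1 - \<epsilon>) * k \<le> k" using e by (simp add: algebra_simps)
    then show ?thesis using hn2 by linarith
  qed
  then have nk: "n \<le> k" by simp
  have n0: "n > 0" using hn1 c1 by linarith
  have hr: "real r \<ge> \<mu> * k - 2"
  proof -
    have "real (nat \<lfloor>\<mu> * k\<rfloor>) \<ge> \<mu> * k - 1" using mu0 by linarith
    then show ?thesis unfolding r_def by linarith
  qed
  have key: "n * \<mu> + n * \<beta> \<le> real r"
  proof -
    have "n * \<mu> + n * \<beta> = n * (\<mu> + \<beta>)" by (simp add: algebra_simps)
    also have "\<dots> \<le> ((1 - \<epsilon>) * k) * (\<mu> + \<beta>)"
      using hn2 mu0 b0 by (intro mult_right_mono) auto
    also have "\<dots> = \<mu> * k - \<epsilon> * k * \<mu> / 2 - \<epsilon>^2 * k * \<mu> / 2"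
      unfolding \<beta>_def by (simp add: power2_eq_square algebra_simps) argo
    also have "\<dots> \<le> \<mu> * k - 2"
    proof -
      have "\<epsilon>^2 * k * \<mu> / 2 \<ge> 0" using mu0 by simp
      then show ?thesis using c3 unfolding \<mu>_def by linarith
    qed
    finally show ?thesis using hr by linarith
  qed
  let ?S = "{xs \<in> llen (E \<times> E) n. \<bar>real (wsum (hp L) xs) - n * \<mu>\<bar> \<le> n * \<beta>}"
  have cc: "real (card ?S) \<ge> A ^ n / 2 / y powr (n * \<mu> - n * \<beta>)"
    unfolding A_def Ay_def
  proof (rule cheb_card[OF finP _ y _ b0 n0])
    show "(\<Sum>p\<in>E \<times> E. y ^ hp L p * (real (hp L p) - \<mu>)) = 0"
      using mean_zero[of y] y unfolding \<mu>_def mu_def by simp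
    show "(\<Sum>p\<in>E \<times> E. y ^ hp L p * (real (hp L p) - \<mu>)^2) \<le> real s ^ 2 * (\<Sum>p\<in>E \<times> E. y ^ hp L p)"
      using var_bound[of y] y unfolding \<mu>_def mu_def Ay_def by simp
    show "2 * real s ^ 2 \<le> real n * \<beta>^2"
    proof -
      have "((1 - \<epsilon>) * k - 1) * \<beta>^2 \<le> real n * \<beta>^2"
        using hn1 by (rule mult_right_mono) simp
      then show ?thesis using c2 unfolding \<beta>_def \<mu>_def by linarith
    qed
  qed
  have sub: "?S \<subseteq> {ps \<in> llen (E \<times> E) n. wsum (hp L) ps \<le> r}"
  proof
    fix xs assume "xs \<in> ?S"
    then have "real (wsum (hp L) xs) \<le> real r" using key by auto
    then show "xs \<in> {ps \<in> llen (E \<times> E) n. wsum (hp L) ps \<le> r}" using \<open>xs \<in> ?S\<close> by simp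
  qed
  have "card ?S \<le> NN L E n r" unfolding NN_def by (rule card_mono[OF finS sub])
  also have "\<dots> \<le> NN L E k r" by (rule NN_mono_k[OF nk])
  finally have cS: "real (card ?S) \<le> real (NN L E k r)" by simp
  have pos: "A ^ n / 2 / y powr (n * \<mu> - n * \<beta>) > 0" using A0 y by simp
  have "log 2 (A ^ n / 2 / y powr (n * \<mu> - n * \<beta>)) \<le> log 2 (real (NN L E k r))"
    using cc cS pos by (subst log_le_cancel_iff) auto
  moreover have "log 2 (A ^ n / 2 / y powr (n * \<mu> - n * \<beta>)) = n * Lam y + n * \<beta> * log 2 y - 1"
    using A0 y unfolding Lam_def A_def \<mu>_def
    by (simp add: log_divide log_nat_power log_powr log_mult algebra_simps)
  moreover have "n * Lam y \<ge> ((1 - \<epsilon>) * k - 1) * Lam y" using hn1 Lam0 by (rule mult_right_mono)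
  moreover have "n * \<beta> * log 2 y \<ge> k * \<beta> * log 2 y"
  proof -
    have "\<beta> * log 2 y \<le> 0" using b0 ly by (simp add: mult_nonneg_nonpos)
    then have "k * (\<beta> * log 2 y) \<le> n * (\<beta> * log 2 y)" using hn3 mult_right_mono_neg by blast
    then show ?thesis by (simp add: mult.assoc)
  qed
  ultimately show ?thesis unfolding r_def \<beta>_def \<mu>_def by linarith
qed

lemma MAIN:
  assumes y: "y > 0" "y \<le> 1" and M: "My L E y > 0"
  shows "(\<lambda>k. log 2 (real (NN L E k (nat \<lfloor>mu y * real k\<rfloor> - 1))) / real (k * s)) \<longlonglongrightarrow> Lam y / s"
  unfolding LIMSEQ_iff real_norm_def
proof (intro allI impI)
  fix e :: real assume e: "e > 0"
  define \<Lambda> where "\<Lambda> = Lam y"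
  define \<mu> where "\<mu> = mu y"
  define ly where "ly = log 2 y"
  define C where "C = \<Lambda> - \<mu> * ly / 2"
  have s0: "real s > 0" using s1 by simp
  have L0: "\<Lambda> \<ge> 0" unfolding \<Lambda>_def using Lam_nonneg[of y] y M by simp
  have mu0: "\<mu> > 0" unfolding \<mu>_def using mu_pos[of y] y M by simp
  have ly0: "ly \<le> 0" unfolding ly_def using y by simp
  have C0: "C \<ge> 0"
  proof -
    have "\<mu> * ly \<le> 0" using mu0 ly0 by (simp add: mult_nonneg_nonpos)
    then show ?thesis unfolding C_def using L0 by linarith
  qed
  define \<epsilon> where "\<epsilon> = min (1/2) (e * s / (2 * (C + 1)))"
  have ep0: "\<epsilon> > 0" unfolding \<epsilon>_def using e s0 C0 by simp
  have ep1: "\<epsilon> \<le> 1/2" unfolding \<epsilon>_def by (rule min.cobounded1)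
  have epC: "\<epsilon> * C \<le> e * s / 2"
  proof -
    have "\<epsilon> * C \<le> (e * s / (2 * (C + 1))) * C" unfolding \<epsilon>_def using C0 by (intro mult_right_mono) auto
    also have "\<dots> = (e * s / 2) * (C / (C + 1))" using C0 by (simp add: field_split_simps)
    also have "\<dots> \<le> (e * s / 2) * 1" using C0 e s0 by (intro mult_left_mono) auto
    finally show ?thesis by simp
  qed
  define \<beta> where "\<beta> = \<epsilon> * \<mu> / 2"
  have b0: "\<beta> > 0" unfolding \<beta>_def using ep0 mu0 by simp
  define K where "K = nat \<lceil>4 + 4 * real s ^ 2 / \<beta>^2 + 4 / (\<epsilon> * \<mu>) + 2 * (\<Lambda> + 1) / (e * s)\<rceil> + 1"
  show "\<exists>no. \<forall>k\<ge>no. \<bar>log 2 (real (NN L E k (nat \<lfloor>mu y * real k\<rfloor> - 1))) / real (k * s) - Lam y / real s\<bar> < e"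
  proof (intro exI allI impI)
    fix k assume kK: "K \<le> k"
    have t1: "4 * real s ^ 2 / \<beta>^2 \<ge> 0" by simp
    have t2: "4 / (\<epsilon> * \<mu>) \<ge> 0" using ep0 mu0 by simp
    have t3: "2 * (\<Lambda> + 1) / (e * s) \<ge> 0" using L0 e s0 by simp
    have kbig: "real k > 4 + 4 * real s ^ 2 / \<beta>^2 + 4 / (\<epsilon> * \<mu>) + 2 * (\<Lambda> + 1) / (e * s)"
    proof -
      have "real K > 4 + 4 * real s ^ 2 / \<beta>^2 + 4 / (\<epsilon> * \<mu>) + 2 * (\<Lambda> + 1) / (e * s)"
        unfolding K_def by linarith
      then show ?thesis using kK by linarith
    qed
    have k4: "real k \<ge> 4" using kbig t1 t2 t3 by linarith
    have kpos: "real k > 0" using k4 by simp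
    have c1: "(1 - \<epsilon>) * k - 1 \<ge> 1"
    proof -
      have "(1 - \<epsilon>) * k \<ge> (1/2) * k" using ep1 kpos by (intro mult_right_mono) auto
      then show ?thesis using k4 by linarith
    qed
    have c2: "2 * real s ^ 2 \<le> ((1 - \<epsilon>) * k - 1) * (\<epsilon> * mu y / 2)^2"
    proof -
      have h: "(1 - \<epsilon>) * k \<ge> (1/2) * k" using ep1 kpos by (intro mult_right_mono) auto
      have "real k / 2 - 1 \<ge> 2 * real s ^ 2 / \<beta>^2" using kbig t2 t3 by linarith
      then have "(real k / 2 - 1) * \<beta>^2 \<ge> 2 * real s ^ 2" using b0 by (simp add: divide_le_eq)
      moreover have "((1 - \<epsilon>) * k - 1) * \<beta>^2 \<ge> (real k / 2 - 1) * \<beta>^2"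
        using h by (intro mult_right_mono) auto
      ultimately show ?thesis unfolding \<beta>_def \<mu>_def by linarith
    qed
    have c3: "\<epsilon> * k * mu y / 2 \<ge> 2"
    proof -
      have "real k \<ge> 4 / (\<epsilon> * \<mu>)" using kbig t1 t3 by linarith
      then have "real k * (\<epsilon> * \<mu>) \<ge> 4" using ep0 mu0 by (simp add: divide_le_eq)
      then show ?thesis unfolding \<mu>_def by (simp add: algebra_simps)
    qed
    have c4: "\<Lambda> + 1 < real k * (e * s / 2)"
    proof -
      have "real k > 2 * (\<Lambda> + 1) / (e * s)" using kbig t1 t2 by linarith
      then have "real k * (e * s) > 2 * (\<Lambda> + 1)" using e s0 by (simp add: divide_less_eq)
      then show ?thesis by (simp add: algebra_simps)
    qed
    let ?N = "log 2 (real (NN L E k (nat \<lfloor>mu y * real k\<rfloor> - 1)))"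
    have lb: "?N \<ge> ((1 - \<epsilon>) * k - 1) * Lam y + k * (\<epsilon> * mu y / 2) * log 2 y - 1"
      by (rule LB[OF y M ep0 _ c1 c2 c3]) (use ep1 in simp)
    have "((1 - \<epsilon>) * k - 1) * Lam y + k * (\<epsilon> * mu y / 2) * log 2 y - 1
          = k * \<Lambda> - (k * (\<epsilon> * C) + \<Lambda> + 1)"
      unfolding C_def \<Lambda>_def \<mu>_def ly_def by (simp add: algebra_simps)
    moreover have "k * (\<epsilon> * C) \<le> k * (e * s / 2)" using epC kpos by (intro mult_left_mono) auto
    ultimately have lb2: "?N > k * \<Lambda> - k * e * s" using lb c4 by (simp add: algebra_simps)
    have ub: "?N \<le> k * \<Lambda>" unfolding \<Lambda>_def using UBk[OF y] M by simp
    have ks: "real (k * s) > 0" using kpos s0 by simp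
    have "?N / real (k * s) > \<Lambda> / s - e"
    proof -
      have "(\<Lambda> / s - e) * real (k * s) = k * \<Lambda> - k * e * s" using s0 by (simp add: field_split_simps)
      then show ?thesis using lb2 ks by (simp add: less_divide_eq)
    qed
    moreover have "?N / real (k * s) \<le> \<Lambda> / s"
    proof -
      have "\<Lambda> / s * real (k * s) = k * \<Lambda>" using s0 by simp
      then show ?thesis using ub ks by (simp add: divide_le_eq)
    qed
    ultimately show "\<bar>?N / real (k * s) - Lam y / real s\<bar> < e" unfolding \<Lambda>_def using e by linarith
  qed
qed

end



lemma limsup_real_of_tendsto:
  fixes X :: "nat \<Rightarrow> real"
  assumes "X \<longlonglongrightarrow> c"
  shows "real_of_ereal (limsup (\<lambda>k. ereal (X k))) = c"
proof -
  have "(\<lambda>k. ereal (X k)) \<longlonglongrightarrow> ereal c" using assms by (rule tendsto_ereal)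
  then have "limsup (\<lambda>k. ereal (X k)) = ereal c" by (rule lim_imp_Limsup[OF trivial_limit_sequentially])
  then show ?thesis by simp
qed

context sg
begin

lemma A_eq: "(\<Sum>t\<le>s. real (alpha L E t) * y ^ t) = Ay L E y"
  unfolding Ay_def using sum_alpha_gen[of "\<lambda>t. y ^ t"] by simp

lemma M_eq: "(\<Sum>t\<le>s. real t * real (alpha L E t) * y ^ t) = My L E y"
proof -
  have "(\<Sum>t\<le>s. real t * real (alpha L E t) * y ^ t) = (\<Sum>t\<le>s. real (alpha L E t) * (real t * y ^ t))"
    by (rule sum.cong) (auto simp: algebra_simps)
  then show ?thesis unfolding My_def using sum_alpha_gen[of "\<lambda>t. real t * y ^ t"] by simp
qed

lemma delta_eq: "delta_y L E s y = My L E y / (s * Ay L E y)"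
  unfolding delta_y_def A_eq M_eq ..

lemma rho_eq: "rho_y L E s y = (1 / s) * (log 2 (real (card E) ^ 2 / Ay L E y) + (My L E y / Ay L E y) * log 2 y)"
  unfolding rho_y_def A_eq M_eq ..

lemma Ay1: "Ay L E 1 = real (card E) ^ 2"
  unfolding Ay_def using fE by (simp add: card_cartesian_product power2_eq_square)

lemma dmax_eq: "delta_max L E s = delta_y L E s 1"
  unfolding delta_max_def delta_y_def
  using A_eq[of 1] Ay1 by simp

lemma cardE_pos: "real (card E) > 0"
  using fE nE by (simp add: card_gt_0_iff)

lemma cap_eq: "cap L E s = log 2 (card E) / s"
proof -
  have "(\<lambda>k. log 2 (real (card (words L E k))) / real (k * s)) \<longlonglongrightarrow> log 2 (card E) / s"
  proof (rule tendsto_eventually)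
    show "\<forall>\<^sub>F k in sequentially. log 2 (real (card (words L E k))) / real (k * s) = log 2 (card E) / s"
      using eventually_ge_at_top[of 1]
    proof (rule eventually_mono)
      fix k :: nat assume k: "1 \<le> k"
      have "log 2 (real (card (words L E k))) = k * log 2 (card E)"
        using cardE_pos by (simp add: card_words log_nat_power)
      then show "log 2 (real (card (words L E k))) / real (k * s) = log 2 (card E) / s"
        using k s1 by simp
    qed
  qed
  then show ?thesis unfolding cap_def by (rule limsup_real_of_tendsto)
qed

lemma Ttilde_eq:
  assumes "(\<lambda>k. log 2 (real (NN L E k (nat \<lfloor>\<delta> * real (k * s)\<rfloor> - 1))) / real (k * s)) \<longlonglongrightarrow> c"
  shows "Ttilde L E s \<delta> = c"
  unfolding Ttilde_def Tsum_NN using assms by (rule limsup_real_of_tendsto)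

lemma R_zero: "R_GV L E s 0 = log 2 (card E) / s"
proof -
  have "Ttilde L E s 0 = log 2 (card E) / s"
  proof (rule Ttilde_eq, rule tendsto_eventually)
    show "\<forall>\<^sub>F k in sequentially. log 2 (real (NN L E k (nat \<lfloor>0 * real (k * s)\<rfloor> - 1))) / real (k * s) = log 2 (card E) / s"
      using eventually_ge_at_top[of 1]
    proof (rule eventually_mono)
      fix k :: nat assume k: "1 \<le> k"
      have "log 2 (real (NN L E k 0)) = k * log 2 (card E)"
        using cardE_pos by (simp add: NN_zero log_nat_power)
      then show "log 2 (real (NN L E k (nat \<lfloor>0 * real (k * s)\<rfloor> - 1))) / real (k * s) = log 2 (card E) / s"
        using k s1 by simp
    qed
  qed
  then show ?thesis unfolding R_GV_def cap_eq by simp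
qed

lemma My0_facts:
  assumes y: "0 \<le> y" and M: "My L E y = 0"
  shows "Ay L E y = card E"
proof -
  have "(\<Sum>p\<in>E \<times> E. y ^ hp L p) = (\<Sum>p\<in>E \<times> E. if hp L p = 0 then 1 else 0)"
  proof (rule sum.cong)
    fix p assume p: "p \<in> E \<times> E"
    have "\<forall>q\<in>E \<times> E. real (hp L q) * y ^ hp L q = 0"
      using sum_nonneg_eq_0_iff[OF finP, of "\<lambda>q. real (hp L q) * y ^ hp L q"] M y unfolding My_def by simp
    then have "real (hp L p) * y ^ hp L p = 0" using p by blast
    then show "y ^ hp L p = (if hp L p = 0 then 1 else 0)" by auto
  qed simp
  also have "\<dots> = card {p \<in> E \<times> E. hp L p = 0}"
  proof -
    have "E \<times> E \<inter> {p. hp L p = 0} = {p \<in> E \<times> E. hp L p = 0}" by auto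
    then show ?thesis using finP by (simp add: sum.If_cases)
  qed
  also have "\<dots> = card E" using card_diag by simp
  finally show ?thesis unfolding Ay_def .
qed

lemma My_0: "My L E 0 = 0"
  unfolding My_def by (rule sum.neutral) auto

lemma PC:
  assumes y: "0 \<le> y" "y \<le> 1"
  shows "R_GV L E s (delta_y L E s y) = rho_y L E s y"
proof (cases "My L E y = 0")
  case True
  have A: "Ay L E y = card E" by (rule My0_facts[OF y(1) True])
  have "delta_y L E s y = 0" unfolding delta_eq True by simp
  moreover have "rho_y L E s y = log 2 (card E) / s"
    unfolding rho_eq True A using cardE_pos by (simp add: power2_eq_square)
  ultimately show ?thesis using R_zero by simp
next
  case False
  then have M: "My L E y > 0" using My_nonneg[OF y(1)] by simp
  have y0: "y > 0" using False My_0 y by (cases "y = 0") auto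
  have s0: "real s > 0" using s1 by simp
  have de: "delta_y L E s y * real (k * s) = mu y * real k" for k
    unfolding delta_eq mu_def using s0 by simp
  have "Ttilde L E s (delta_y L E s y) = Lam y / s"
    by (rule Ttilde_eq) (use MAIN[OF y0 y(2) M] in \<open>simp only: de\<close>)
  then have "R_GV L E s (delta_y L E s y) = 2 * (log 2 (card E) / s) - Lam y / s"
    unfolding R_GV_def cap_eq by simp
  also have "\<dots> = rho_y L E s y"
  proof -
    have eq: "log 2 (real (card E) ^ 2 / Ay L E y) = 2 * log 2 (card E) - log 2 (Ay L E y)"
      using cardE_pos Ay_pos[OF y(1)] by (simp add: log_divide log_nat_power)
    show ?thesis unfolding rho_eq Lam_def mu_def eq
      by (simp add: algebra_simps diff_divide_distrib add_divide_distrib)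
  qed
  finally show ?thesis .
qed

end



context sg
begin

lemma BIG:
  assumes d: "delta_max L E s \<le> \<delta>" "\<delta> \<le> 1"
  shows "R_GV L E s \<delta> = 0"
proof -
  have s0: "real s > 0" using s1 by simp
  let ?g = "\<lambda>k. log 2 (real (NN L E k (nat \<lfloor>\<delta> * real (k * s)\<rfloor> - 1))) / real (k * s)"
  have "Ttilde L E s \<delta> = 2 * (log 2 (card E) / s)"
  proof (cases "My L E 1 = 0")
    case True
    have "Ay L E 1 = card E" by (rule My0_facts) (use True in auto)
    then have "real (card E) ^ 2 = real (card E)" using Ay1 by simp
    then have c1: "card E = 1" using cardE_pos by (simp add: power2_eq_square)
    show ?thesis
    proof (rule Ttilde_eq, rule tendsto_eventually, rule always_eventually, rule allI)
      fix k
      have "NN L E k (nat \<lfloor>\<delta> * real (k * s)\<rfloor> - 1) = 1"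
        using NN_le_total[of k] NN_pos[of k] c1 by (metis le_antisym power_one)
      then show "?g k = 2 * (log 2 (card E) / s)" using c1 by simp
    qed
  next
    case False
    then have M: "My L E 1 > 0" using My_nonneg[of 1] by simp
    have Lam1: "Lam 1 = 2 * log 2 (card E)"
      unfolding Lam_def using Ay1 cardE_pos by (simp add: log_nat_power)
    have dm: "delta_max L E s = mu 1 / s" unfolding dmax_eq delta_eq mu_def by simp
    show ?thesis
    proof (rule Ttilde_eq, rule tendsto_sandwich)
      show "(\<lambda>k. log 2 (real (NN L E k (nat \<lfloor>mu 1 * real k\<rfloor> - 1))) / real (k * s)) \<longlonglongrightarrow> 2 * (log 2 (card E) / s)"
        using MAIN[of 1] M Lam1 by simp
      show "((\<lambda>k. 2 * (log 2 (card E) / s)) \<longlongrightarrow> 2 * (log 2 (card E) / s)) sequentially" by simp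
      show "\<forall>\<^sub>F k in sequentially. log 2 (real (NN L E k (nat \<lfloor>mu 1 * real k\<rfloor> - 1))) / real (k * s) \<le> ?g k"
      proof (rule always_eventually, rule allI)
        fix k
        have "mu 1 * real k \<le> \<delta> * real (k * s)"
        proof -
          have "mu 1 * real k = delta_max L E s * real (k * s)" unfolding dm using s0 by simp
          also have "\<dots> \<le> \<delta> * real (k * s)" using d by (intro mult_right_mono) auto
          finally show ?thesis .
        qed
        then have "nat \<lfloor>mu 1 * real k\<rfloor> - 1 \<le> nat \<lfloor>\<delta> * real (k * s)\<rfloor> - 1"
          by (intro diff_le_mono nat_mono floor_mono)
        then have "NN L E k (nat \<lfloor>mu 1 * real k\<rfloor> - 1) \<le> NN L E k (nat \<lfloor>\<delta> * real (k * s)\<rfloor> - 1)"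
          by (rule NN_mono_r)
        then have "log 2 (real (NN L E k (nat \<lfloor>mu 1 * real k\<rfloor> - 1))) \<le> log 2 (real (NN L E k (nat \<lfloor>\<delta> * real (k * s)\<rfloor> - 1)))"
          using NN_pos[of k "nat \<lfloor>mu 1 * real k\<rfloor> - 1"] by simp
        then show "log 2 (real (NN L E k (nat \<lfloor>mu 1 * real k\<rfloor> - 1))) / real (k * s) \<le> ?g k"
          by (rule divide_right_mono) simp
      qed
      show "\<forall>\<^sub>F k in sequentially. ?g k \<le> 2 * (log 2 (card E) / s)"
        using eventually_ge_at_top[of 1]
      proof (rule eventually_mono)
        fix k :: nat assume k: "1 \<le> k"
        have "log 2 (real (NN L E k (nat \<lfloor>\<delta> * real (k * s)\<rfloor> - 1))) \<le> log 2 (real (card E ^ (2 * k)))"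
        proof -
          have a: "real (NN L E k (nat \<lfloor>\<delta> * real (k * s)\<rfloor> - 1)) \<le> real (card E ^ (2 * k))"
            using NN_le_total[of k "nat \<lfloor>\<delta> * real (k * s)\<rfloor> - 1"] of_nat_le_iff by blast
          have b: "real (NN L E k (nat \<lfloor>\<delta> * real (k * s)\<rfloor> - 1)) > 0"
            using NN_pos[of k "nat \<lfloor>\<delta> * real (k * s)\<rfloor> - 1"] by simp
          show ?thesis using a b cardE_pos by (subst log_le_cancel_iff) auto
        qed
        also have "\<dots> = (2 * k) * log 2 (card E)" using cardE_pos by (simp add: log_nat_power)
        finally have "log 2 (real (NN L E k (nat \<lfloor>\<delta> * real (k * s)\<rfloor> - 1))) \<le> (2 * k) * log 2 (card E)" .
        moreover have "real (k * s) > 0" using k s0 by simp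
        moreover have "(2 * k) * log 2 (card E) / real (k * s) = 2 * (log 2 (card E) / s)"
          using k s0 by simp
        ultimately show "?g k \<le> 2 * (log 2 (card E) / s)"
          by (metis divide_right_mono less_le)
      qed
    qed
  qed
  then show ?thesis unfolding R_GV_def cap_eq by simp
qed

lemma delta_0: "delta_y L E s 0 = 0"
  unfolding delta_eq My_0 by simp

lemma delta_range: assumes "0 \<le> y" shows "0 \<le> delta_y L E s y" "delta_y L E s y \<le> 1"
proof -
  have A: "Ay L E y > 0" using Ay_pos assms by simp
  have s0: "real s > 0" using s1 by simp
  show "0 \<le> delta_y L E s y" unfolding delta_eq using My_nonneg[OF assms] A s0 by simp
  show "delta_y L E s y \<le> 1" unfolding delta_eq using My_le[OF assms] A s0 by (simp add: divide_le_eq)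
qed

lemma delta_cont: "continuous_on {0..1} (delta_y L E s)"
proof -
  have nz: "\<forall>y\<in>{0..1}. real s * (\<Sum>t\<le>s. real (alpha L E t) * y ^ t) \<noteq> 0"
  proof
    fix y :: real assume "y \<in> {0..1}"
    then have "Ay L E y > 0" using Ay_pos by simp
    then show "real s * (\<Sum>t\<le>s. real (alpha L E t) * y ^ t) \<noteq> 0" unfolding A_eq using s1 by simp
  qed
  show ?thesis unfolding delta_y_def[abs_def]
    by (intro continuous_intros) (use nz in auto)
qed

end

theorem corollary2:
  fixes E :: "'e set" and L :: "'e \<Rightarrow> bool list" and s :: nat
  assumes "finite E" and "E \<noteq> {}" and "s \<ge> 1"
    and "inj_on L E" and "\<forall>e\<in>E. length (L e) = s"
  shows "{(\<delta>, R_GV L E s \<delta>) | \<delta>. 0 \<le> \<delta> \<and> \<delta> \<le> 1}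
       = {(delta_y L E s y, rho_y L E s y) | y. 0 \<le> y \<and> y \<le> 1}
         \<union> {(\<delta>, 0) | \<delta>. delta_max L E s \<le> \<delta> \<and> \<delta> \<le> 1}"
proof -
  interpret sg E L s using assms by unfold_locales
  show ?thesis
  proof (intro equalityI subsetI)
    fix z assume "z \<in> {(\<delta>, R_GV L E s \<delta>) | \<delta>. 0 \<le> \<delta> \<and> \<delta> \<le> 1}"
    then obtain \<delta> where z: "z = (\<delta>, R_GV L E s \<delta>)" and d: "0 \<le> \<delta>" "\<delta> \<le> 1" by blast
    show "z \<in> {(delta_y L E s y, rho_y L E s y) | y. 0 \<le> y \<and> y \<le> 1}
         \<union> {(\<delta>, 0) | \<delta>. delta_max L E s \<le> \<delta> \<and> \<delta> \<le> 1}"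
    proof (cases "delta_max L E s \<le> \<delta>")
      case True
      then show ?thesis using z d BIG by auto
    next
      case False
      have "\<exists>y. 0 \<le> y \<and> y \<le> 1 \<and> delta_y L E s y = \<delta>"
        by (rule IVT'[OF _ _ _ delta_cont]) (use d False delta_0 dmax_eq in auto)
      then obtain y where y: "0 \<le> y" "y \<le> 1" "delta_y L E s y = \<delta>" by blast
      have "z = (delta_y L E s y, rho_y L E s y)" using z y PC[OF y(1,2)] by simp
      then show ?thesis using y by blast
    qed
  next
    fix z assume "z \<in> {(delta_y L E s y, rho_y L E s y) | y. 0 \<le> y \<and> y \<le> 1}
         \<union> {(\<delta>, 0) | \<delta>. delta_max L E s \<le> \<delta> \<and> \<delta> \<le> 1}"
    then show "z \<in> {(\<delta>, R_GV L E s \<delta>) | \<delta>. 0 \<le> \<delta> \<and> \<delta> \<le> 1}"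
    proof
      assume "z \<in> {(delta_y L E s y, rho_y L E s y) | y. 0 \<le> y \<and> y \<le> 1}"
      then obtain y where z: "z = (delta_y L E s y, rho_y L E s y)" and y: "0 \<le> y" "y \<le> 1" by blast
      have "z = (delta_y L E s y, R_GV L E s (delta_y L E s y))" using z PC[OF y] by simp
      then show ?thesis using delta_range[OF y(1)] by blast
    next
      assume "z \<in> {(\<delta>, 0) | \<delta>. delta_max L E s \<le> \<delta> \<and> \<delta> \<le> 1}"
      then obtain \<delta> where z: "z = (\<delta>, 0)" and d: "delta_max L E s \<le> \<delta>" "\<delta> \<le> 1" by blast
      have "0 \<le> delta_max L E s" unfolding dmax_eq using delta_range(1)[of 1] by simp
      then have "z = (\<delta>, R_GV L E s \<delta>) \<and> 0 \<le> \<delta> \<and> \<delta> \<le> 1" using z d BIG[OF d] by simp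
      then show ?thesis by blast
    qed
  qed
qed


end
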